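(* Let $X=X(\Delta)$ be a smooth projective toric variety of dimension $n$ with rays $\rho_1,\dots,\rho_{n+r}$, and suppose there is a maximal cone $\sigma_0$ with $\sigma_0(1)=\{\rho_1,\dots,\rho_n\}$ such that every $\rho_{n+j}$ ($1\le j\le r$) is a combination of $\rho_1,\dots,\rho_n$ with non-positive coefficients. Write $\mathcal{P}_{n+j}:\rho_{n+j}+\sum_{i=1}^n\mathfrak{b}_{i,j}\rho_i=0$ ($1\le j\le r$). Then these are positive relations (all $\mathfrak{b}_{i,j}\in\mathbb{Z}_{\ge0}$). If $L=\mathcal{O}_X(D)$ with $D=\sum_{i=1}^{n+r}\mathfrak{a}_iD_{\rho_i}$ is globally generated, then $$\deg_L(\mathcal{P}_{n+j})=\mathfrak{a}_{n+j}+\sum_{i=1}^n\mathfrak{a}_i\mathfrak{b}_{i,j}\ge\beta,$$ where $\beta$ is the minimal $L$-degree of centred primitive relations.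
   Context: Rays are identified with primitive generators; $D_\rho$ is the torus-invariant divisor of $\rho$. A relation $\sum c_\rho\rho=0$ ($c_\rho\in\mathbb{Z}$, not all zero) is positive if all $c_\rho\ge0$. For $D=\sum a_\rho D_\rho$, $\phi_D$ equals $\langle m_D(\sigma),\cdot\rangle$ on each maximal cone $\sigma$, where $\langle m_D(\sigma),\rho\rangle=-a_\rho$ for $\rho\in\sigma(1)$; the $L$-degree of a relation $\sum c_\rho\rho=0$ is $-\sum c_\rho\phi_D(\rho)$. A primitive collection is a set of rays not generating a cone while every proper subset does; it is centred if its elements sum to $0$, giving the centred primitive relation $\sum_{\rho\in\mathcal{I}}\rho=0$. *)

theory Defs
  imports "HOL-Analysis.Analysis"
begin

(* Lattice N = Z^n inside real^'n (n = CARD('n)); dual lattice M identified with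
   real^'n via the standard inner product.  Rays are indexed by natural numbers
   through u :: nat => real^'n; cones of the fan are encoded by sets of ray indices. *)

definition integral_vec :: "real^'n \<Rightarrow> bool" where
  "integral_vec v \<longleftrightarrow> (\<forall>i. v $ i \<in> \<int>)"

definition primitive_vec :: "real^'n \<Rightarrow> bool" where
  "primitive_vec v \<longleftrightarrow> integral_vec v \<and> v \<noteq> 0 \<and>
     (\<forall>(k::int) w. integral_vec w \<and> v = of_int k *\<^sub>R w \<longrightarrow> \<bar>k\<bar> = 1)"

definition cone_gen :: "(nat \<Rightarrow> real^'n) \<Rightarrow> nat set \<Rightarrow> (real^'n) set" where
  "cone_gen u S = {(\<Sum>i\<in>S. t i *\<^sub>R u i) | t. \<forall>i\<in>S. t i \<ge> 0}"

definition unimodular :: "(nat \<Rightarrow> real^'n) \<Rightarrow> nat set \<Rightarrow> bool" where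
  "unimodular u S \<longleftrightarrow> card S = CARD('n) \<and>
     (\<forall>v. integral_vec v \<longrightarrow> (\<exists>c::nat \<Rightarrow> int. v = (\<Sum>i\<in>S. of_int (c i) *\<^sub>R u i)))"

definition max_cone :: "nat set set \<Rightarrow> nat set \<Rightarrow> bool" where
  "max_cone C S \<longleftrightarrow> S \<in> C \<and> card S = CARD('n::finite)"

definition mD :: "(nat \<Rightarrow> real^'n) \<Rightarrow> (nat \<Rightarrow> int) \<Rightarrow> nat set \<Rightarrow> real^'n" where
  "mD u a S = (THE m. \<forall>i\<in>S. m \<bullet> u i = - of_int (a i))"

definition phiD :: "(nat \<Rightarrow> real^'n) \<Rightarrow> nat set set \<Rightarrow> (nat \<Rightarrow> int) \<Rightarrow> real^'n \<Rightarrow> real" where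
  "phiD u C a v = mD u a (SOME S. max_cone TYPE('n) C S \<and> v \<in> cone_gen u S) \<bullet> v"

definition smooth_complete_fan ::
    "(nat \<Rightarrow> real^'n) \<Rightarrow> nat set \<Rightarrow> nat set set \<Rightarrow> bool" where
  "smooth_complete_fan u I C \<longleftrightarrow>
     finite I \<and> inj_on u I \<and> (\<forall>i\<in>I. primitive_vec (u i)) \<and>
     C \<subseteq> Pow I \<and> (\<forall>S\<in>C. \<forall>T. T \<subseteq> S \<longrightarrow> T \<in> C) \<and>
     (\<forall>i\<in>I. {i} \<in> C) \<and>
     (\<forall>S\<in>C. \<exists>T\<in>C. S \<subseteq> T \<and> unimodular u T) \<and>
     (\<forall>S\<in>C. \<forall>T\<in>C. cone_gen u S \<inter> cone_gen u T = cone_gen u (S \<inter> T)) \<and>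
     (\<Union>S\<in>C. cone_gen u S) = UNIV"

text \<open>D = sum a_i D_i is globally generated iff each m_D(sigma) lies in P_D.\<close>
definition globally_generated ::
    "(nat \<Rightarrow> real^'n) \<Rightarrow> nat set \<Rightarrow> nat set set \<Rightarrow> (nat \<Rightarrow> int) \<Rightarrow> bool" where
  "globally_generated u I C a \<longleftrightarrow>
     (\<forall>S. max_cone TYPE('n) C S \<longrightarrow> (\<forall>j\<in>I. mD u a S \<bullet> u j \<ge> - of_int (a j)))"

text \<open>D is ample: phi_D strictly convex (strict inequalities off the cone).\<close>
definition ample ::
    "(nat \<Rightarrow> real^'n) \<Rightarrow> nat set \<Rightarrow> nat set set \<Rightarrow> (nat \<Rightarrow> int) \<Rightarrow> bool" where
  "ample u I C a \<longleftrightarrow>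
     (\<forall>S. max_cone TYPE('n) C S \<longrightarrow> (\<forall>j\<in>I - S. mD u a S \<bullet> u j > - of_int (a j)))"

definition smooth_projective_fan ::
    "(nat \<Rightarrow> real^'n) \<Rightarrow> nat set \<Rightarrow> nat set set \<Rightarrow> bool" where
  "smooth_projective_fan u I C \<longleftrightarrow> smooth_complete_fan u I C \<and> (\<exists>a. ample u I C a)"

definition is_relation :: "(nat \<Rightarrow> real^'n) \<Rightarrow> nat set \<Rightarrow> (nat \<Rightarrow> int) \<Rightarrow> bool" where
  "is_relation u I c \<longleftrightarrow> (\<Sum>i\<in>I. of_int (c i) *\<^sub>R u i) = 0 \<and> (\<exists>i\<in>I. c i \<noteq> 0)"

definition positive_relation :: "(nat \<Rightarrow> real^'n) \<Rightarrow> nat set \<Rightarrow> (nat \<Rightarrow> int) \<Rightarrow> bool" where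
  "positive_relation u I c \<longleftrightarrow> is_relation u I c \<and> (\<forall>i\<in>I. c i \<ge> 0)"

definition degL ::
    "(nat \<Rightarrow> real^'n) \<Rightarrow> nat set \<Rightarrow> nat set set \<Rightarrow> (nat \<Rightarrow> int) \<Rightarrow> (nat \<Rightarrow> int) \<Rightarrow> real" where
  "degL u I C a c = - (\<Sum>i\<in>I. of_int (c i) * phiD u C a (u i))"

definition primitive_collection :: "nat set \<Rightarrow> nat set set \<Rightarrow> nat set \<Rightarrow> bool" where
  "primitive_collection I C P \<longleftrightarrow> P \<subseteq> I \<and> P \<notin> C \<and> (\<forall>Q. Q \<subset> P \<longrightarrow> Q \<in> C)"

definition centred_primitive_collection ::
    "(nat \<Rightarrow> real^'n) \<Rightarrow> nat set \<Rightarrow> nat set set \<Rightarrow> nat set \<Rightarrow> bool" where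
  "centred_primitive_collection u I C P \<longleftrightarrow>
     primitive_collection I C P \<and> (\<Sum>i\<in>P. u i) = 0"

definition centred_rel :: "nat set \<Rightarrow> nat \<Rightarrow> int" where
  "centred_rel P = (\<lambda>i. if i \<in> P then 1 else 0)"

definition beta ::
    "(nat \<Rightarrow> real^'n) \<Rightarrow> nat set \<Rightarrow> nat set set \<Rightarrow> (nat \<Rightarrow> int) \<Rightarrow> real" where
  "beta u I C a = Min {degL u I C a (centred_rel P) | P. centred_primitive_collection u I C P}"

end

theory Submission
  imports Defs
begin

lemma unimod_basics:
  fixes u :: "nat \<Rightarrow> real^'n"
  assumes um: "unimodular u S"
  shows "finite S" "span (u ` S) = UNIV" "inj_on u S"
    "\<And>c. (\<Sum>i\<in>S. c i *\<^sub>R u i) = 0 \<Longrightarrow> \<forall>i\<in>S. c i = 0"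
proof -
  have cS: "card S = CARD('n)" using um by (simp add: unimodular_def)
  then show fS: "finite S" using card.infinite by fastforce
  have "Basis \<subseteq> span (u ` S)"
  proof
    fix x :: "real^'n" assume "x \<in> Basis"
    then obtain k where x: "x = axis k 1" by (auto simp: Basis_vec_def)
    have "integral_vec x" unfolding integral_vec_def x axis_def by auto
    then obtain c :: "nat \<Rightarrow> int" where "x = (\<Sum>i\<in>S. of_int (c i) *\<^sub>R u i)"
      using um unfolding unimodular_def by blast
    moreover have "(\<Sum>i\<in>S. of_int (c i) *\<^sub>R u i) \<in> span (u ` S)"
      by (rule span_sum, rule span_scale, rule span_base, simp)
    ultimately show "x \<in> span (u ` S)" by simp
  qed
  then have "span Basis \<subseteq> span (u ` S)" by (metis span_mono span_span)
  then show sp: "span (u ` S) = UNIV" by auto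
  have "dim (UNIV :: (real^'n) set) \<le> card (u ` S)"
    using span_card_ge_dim[of "u ` S" UNIV] sp fS by auto
  then have "CARD('n) \<le> card (u ` S)" by simp
  moreover have "card (u ` S) \<le> card S" using fS card_image_le by blast
  ultimately have ce: "card (u ` S) = card S" using cS by simp
  then show inj: "inj_on u S" using fS eq_card_imp_inj_on by blast
  have ind: "independent (u ` S)"
    using card_le_dim_spanning[of "u ` S" UNIV] sp fS ce cS by auto
  fix c :: "nat \<Rightarrow> real" assume h: "(\<Sum>i\<in>S. c i *\<^sub>R u i) = 0"
  show "\<forall>i\<in>S. c i = 0"
  proof
    fix i assume iS: "i \<in> S"
    define d where "d = (\<lambda>v. c (the_inv_into S u v))"
    have "(\<Sum>v\<in>u ` S. d v *\<^sub>R v) = (\<Sum>i\<in>S. d (u i) *\<^sub>R u i)"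
      using sum.reindex[OF inj] by simp
    also have "\<dots> = (\<Sum>i\<in>S. c i *\<^sub>R u i)"
      using inj by (auto simp: d_def the_inv_into_f_f intro!: sum.cong)
    finally have "(\<Sum>v\<in>u ` S. d v *\<^sub>R v) = 0" using h by simp
    then have "\<forall>v\<in>u ` S. d v = 0" using ind fS unfolding independent_explicit by auto
    then show "c i = 0" using iS inj by (auto simp: d_def the_inv_into_f_f)
  qed
qed


lemma orth_zero:
  fixes u :: "nat \<Rightarrow> real^'n"
  assumes um: "unimodular u S" and h: "\<forall>i\<in>S. m \<bullet> u i = 0"
  shows "m = 0"
proof -
  have "orthogonal m m"
    using orthogonal_to_span[of m "u ` S" m] unimod_basics(2)[OF um] h
    by (auto simp: orthogonal_def)
  then show ?thesis by (simp add: orthogonal_def)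
qed

lemma dual_exists:
  fixes u :: "nat \<Rightarrow> real^'n"
  assumes um: "unimodular u S"
  shows "\<exists>m. \<forall>i\<in>S. m \<bullet> u i = f i"
proof -
  have fS: "finite S" and cS: "card S = CARD('n)"
    using unimod_basics(1)[OF um] um by (auto simp: unimodular_def)
  obtain g where g: "bij_betw g (UNIV::'n set) S"
    using finite_same_card_bij[of "UNIV::'n set" S] fS cS by auto
  define L where "L = (\<lambda>m::real^'n. \<chi> k. m \<bullet> u (g k))"
  have lin: "linear L"
    by (rule linearI) (auto simp: L_def vec_eq_iff inner_add_left)
  have "inj L"
  proof (rule injI)
    fix x y assume "L x = L y"
    then have "\<forall>k. (x - y) \<bullet> u (g k) = 0"
      by (auto simp: L_def vec_eq_iff inner_diff_left)
    then have "\<forall>i\<in>S. (x - y) \<bullet> u i = 0"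
      using g by (metis bij_betw_imp_surj_on imageE)
    then have "x - y = 0" using orth_zero[OF um] by blast
    then show "x = y" by simp
  qed
  then have "surj L" using lin linear_inj_imp_surj by blast
  then obtain m where m: "L m = (\<chi> k. f (g k))" by (metis surjD)
  show ?thesis
  proof (intro exI ballI)
    fix i assume "i \<in> S"
    then obtain k where "i = g k" using g by (metis bij_betw_imp_surj_on imageE)
    then show "m \<bullet> u i = f i" using m by (auto simp: L_def vec_eq_iff)
  qed
qed

lemma mD_prop:
  fixes u :: "nat \<Rightarrow> real^'n"
  assumes um: "unimodular u S" and iS: "i \<in> S"
  shows "mD u a S \<bullet> u i = - of_int (a i)"
proof -
  obtain m where m: "\<forall>i\<in>S. m \<bullet> u i = - of_int (a i)"
    using dual_exists[OF um, of "\<lambda>i. - of_int (a i)"] by blast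
  have "\<forall>i\<in>S. mD u a S \<bullet> u i = - of_int (a i)"
    unfolding mD_def
  proof (rule theI[of _ m])
    show "\<forall>i\<in>S. m \<bullet> u i = - of_int (a i)" by (rule m)
    fix m' assume "\<forall>i\<in>S. m' \<bullet> u i = - real_of_int (a i)"
    then have "\<forall>i\<in>S. (m' - m) \<bullet> u i = 0" using m by (simp add: inner_diff_left)
    then have "m' - m = 0" using orth_zero[OF um] by blast
    then show "m' = m" by simp
  qed
  then show ?thesis using iS by blast
qed


lemma fanD:
  assumes "smooth_complete_fan u I C"
  shows "finite I" "inj_on u I" "\<forall>i\<in>I. primitive_vec (u i)" "C \<subseteq> Pow I"
    "\<forall>S\<in>C. \<forall>T. T \<subseteq> S \<longrightarrow> T \<in> C" "\<forall>i\<in>I. {i} \<in> C"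
    "\<forall>S\<in>C. \<exists>T\<in>C. S \<subseteq> T \<and> unimodular u T"
    "\<forall>S\<in>C. \<forall>T\<in>C. cone_gen u S \<inter> cone_gen u T = cone_gen u (S \<inter> T)"
    "(\<Union>S\<in>C. cone_gen u S) = UNIV"
  using assms unfolding smooth_complete_fan_def apply -
  apply (elim conjE, assumption)+
  done

lemma maxD:
  "max_cone TYPE('n::finite) C S \<longleftrightarrow> S \<in> C \<and> card S = CARD('n)"
  by (simp add: max_cone_def)

lemma unimod_card:
  fixes u :: "nat \<Rightarrow> real^'n"
  shows "unimodular u S \<Longrightarrow> card S = CARD('n)"
  by (simp add: unimodular_def)

lemma fan_max_unimod:
  fixes u :: "nat \<Rightarrow> real^'n"
  assumes fan: "smooth_complete_fan u I C" and mc: "max_cone TYPE('n) C S"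
  shows "unimodular u S"
proof -
  have SC: "S \<in> C" using mc maxD by blast
  then obtain T where T: "T \<in> C" "S \<subseteq> T" "unimodular u T"
    using fanD(7)[OF fan] by blast
  have "T \<subseteq> I" "finite I" using fanD(1,4)[OF fan] T(1) by blast+
  then have "finite T" by (rule finite_subset)
  moreover have "card S = card T" using mc T(3) maxD unimod_card by metis
  ultimately have "S = T" using T(2) card_subset_eq by blast
  then show ?thesis using T by simp
qed

lemma fan_cone_in_max:
  fixes u :: "nat \<Rightarrow> real^'n"
  assumes fan: "smooth_complete_fan u I C" and S: "S \<in> C"
  shows "\<exists>T. max_cone TYPE('n) C T \<and> S \<subseteq> T"
proof -
  obtain T where T: "T \<in> C" "S \<subseteq> T" "unimodular u T"
    using fanD(7)[OF fan] S by blast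
  then have "max_cone TYPE('n) C T" using maxD unimod_card by metis
  then show ?thesis using T(2) by blast
qed

lemma cone_gen_empty: "cone_gen u {} = {0}"
  unfolding cone_gen_def by (rule set_eqI) simp

lemma cone_gen_mono:
  assumes "S \<subseteq> T" "finite T"
  shows "cone_gen u S \<subseteq> cone_gen u T"
proof
  fix v assume "v \<in> cone_gen u S"
  then obtain t where t: "v = (\<Sum>i\<in>S. t i *\<^sub>R u i)" "\<forall>i\<in>S. t i \<ge> 0"
    unfolding cone_gen_def mem_Collect_eq by blast
  define t' where "t' = (\<lambda>i. if i \<in> S then t i else 0)"
  have "(\<Sum>i\<in>T. t' i *\<^sub>R u i) = (\<Sum>i\<in>T \<inter> S. t i *\<^sub>R u i)"
  proof -
    have "(\<lambda>i. t' i *\<^sub>R u i) = (\<lambda>i. if i \<in> S then t i *\<^sub>R u i else 0)"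
      unfolding t'_def by (rule ext) simp
    then show ?thesis using sum.inter_restrict[OF assms(2), of "\<lambda>i. t i *\<^sub>R u i" S] by metis
  qed
  also have "T \<inter> S = S" using assms by auto
  finally have "v = (\<Sum>i\<in>T. t' i *\<^sub>R u i)" using t by simp
  moreover have "\<forall>i\<in>T. t' i \<ge> 0" using t by (auto simp: t'_def)
  ultimately show "v \<in> cone_gen u T" unfolding cone_gen_def mem_Collect_eq by blast
qed

lemma phi_ray:
  fixes u :: "nat \<Rightarrow> real^'n"
  assumes fan: "smooth_complete_fan u I C" and iI: "i \<in> I"
  shows "phiD u C a (u i) = - of_int (a i)"
proof -
  have "{i} \<in> C" using fanD(6)[OF fan] iI by blast
  then obtain T where T: "max_cone TYPE('n) C T" "{i} \<subseteq> T"
    using fan_cone_in_max[OF fan] by blast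
  have fT: "finite T" using fan_max_unimod[OF fan T(1)] unimod_basics(1) by blast
  have ic: "u i \<in> cone_gen u {i}" unfolding cone_gen_def
    by (rule CollectI, rule exI[of _ "\<lambda>_. 1"], simp only: sum.insert_if finite.emptyI sum.empty, simp)
  then have "u i \<in> cone_gen u T" using cone_gen_mono[OF T(2) fT] by blast
  then have ex: "\<exists>S. max_cone TYPE('n) C S \<and> u i \<in> cone_gen u S" using T by blast
  define S where "S = (SOME S. max_cone TYPE('n) C S \<and> u i \<in> cone_gen u S)"
  have S: "max_cone TYPE('n) C S" "u i \<in> cone_gen u S"
    using someI_ex[OF ex] unfolding S_def by auto
  have "i \<in> S"
  proof (rule ccontr)
    assume "i \<notin> S"
    then have "S \<inter> {i} = {}" by auto
    moreover have "cone_gen u S \<inter> cone_gen u {i} = cone_gen u (S \<inter> {i})"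
      using fanD(8)[OF fan] S(1) \<open>{i} \<in> C\<close> maxD by blast
    moreover have "u i \<in> cone_gen u S \<inter> cone_gen u {i}" using S(2) ic by (rule IntI)
    ultimately have "u i \<in> cone_gen u {}" by simp
    then have "u i = 0" unfolding cone_gen_empty by simp
    moreover have "u i \<noteq> 0" using fanD(3)[OF fan] iI unfolding primitive_vec_def by blast
    ultimately show False by simp
  qed
  then show ?thesis unfolding phiD_def S_def[symmetric]
    using mD_prop[OF fan_max_unimod[OF fan S(1)]] by blast
qed

lemma degL_eq:
  fixes u :: "nat \<Rightarrow> real^'n"
  assumes fan: "smooth_complete_fan u I C"
  shows "degL u I C a c = of_int (\<Sum>i\<in>I. c i * a i)"
proof -
  have "degL u I C a c = - (\<Sum>i\<in>I. of_int (c i) * (- of_int (a i)))"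
    unfolding degL_def
    by (intro arg_cong[where f=uminus] sum.cong refl) (simp only: phi_ray[OF fan])
  also have "\<dots> = (\<Sum>i\<in>I. of_int (c i) * of_int (a i))" by (simp add: sum_negf)
  also have "\<dots> = of_int (\<Sum>i\<in>I. c i * a i)" by simp
  finally show ?thesis .
qed


lemma int_coeffs:
  fixes u :: "nat \<Rightarrow> real^'n"
  assumes um: "unimodular u T" and iv: "integral_vec v"
    and vt: "v = (\<Sum>i\<in>T. t i *\<^sub>R u i)" and tp: "\<forall>i\<in>T. t i \<ge> 0"
  shows "\<exists>d::nat \<Rightarrow> int. v = (\<Sum>i\<in>T. of_int (d i) *\<^sub>R u i) \<and> (\<forall>i\<in>T. d i \<ge> 0)"
proof -
  obtain d :: "nat \<Rightarrow> int" where d: "v = (\<Sum>i\<in>T. of_int (d i) *\<^sub>R u i)"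
    using um iv unfolding unimodular_def by blast
  have "(\<Sum>i\<in>T. (of_int (d i) - t i) *\<^sub>R u i) = 0"
    using d vt by (simp add: scaleR_left_diff_distrib sum_subtractf)
  then have "\<forall>i\<in>T. of_int (d i) - t i = 0" using unimod_basics(4)[OF um, of "\<lambda>i. of_int (d i) - t i"] by blast
  then have "\<forall>i\<in>T. d i \<ge> 0" using tp by (metis eq_iff_diff_eq_0 of_int_0_le_iff)
  then show ?thesis using d by blast
qed

lemma integral_sum:
  assumes "\<forall>i\<in>P. integral_vec (u i)"
  shows "integral_vec (\<Sum>i\<in>P. u i)"
  using assms unfolding integral_vec_def by (auto intro!: Ints_sum)

lemma no_pos_rel_cone:
  fixes u :: "nat \<Rightarrow> real^'n"
  assumes fan: "smooth_complete_fan u I C"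
    and rel: "(\<Sum>i\<in>I. of_int (c i) *\<^sub>R u i) = 0" and nz: "\<exists>i\<in>I. c i \<noteq> 0"
  shows "{i\<in>I. c i \<noteq> 0} \<notin> C"
proof
  define T0 where "T0 = {i\<in>I. c i \<noteq> 0}"
  assume "{i\<in>I. c i \<noteq> 0} \<in> C"
  then have "T0 \<in> C" by (simp add: T0_def)
  then obtain T where T: "max_cone TYPE('n) C T" "T0 \<subseteq> T"
    using fan_cone_in_max[OF fan] by blast
  have um: "unimodular u T" using fan_max_unimod[OF fan T(1)] .
  have fT: "finite T" using unimod_basics(1)[OF um] .
  have fI: "finite I" using fanD(1)[OF fan] .
  define c' where "c' = (\<lambda>i. if i \<in> T0 then real_of_int (c i) else 0)"
  have "(\<Sum>i\<in>T. c' i *\<^sub>R u i) = (\<Sum>i\<in>T \<inter> T0. of_int (c i) *\<^sub>R u i)"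
  proof -
    have "(\<lambda>i. c' i *\<^sub>R u i) = (\<lambda>i. if i \<in> T0 then of_int (c i) *\<^sub>R u i else 0)"
      unfolding c'_def by (rule ext) simp
    then show ?thesis using sum.inter_restrict[OF fT, of "\<lambda>i. of_int (c i) *\<^sub>R u i" T0] by metis
  qed
  also have "T \<inter> T0 = T0" using T by auto
  also have "(\<Sum>i\<in>T0. of_int (c i) *\<^sub>R u i) = (\<Sum>i\<in>I. of_int (c i) *\<^sub>R u i)"
    unfolding T0_def by (rule sum.mono_neutral_left[OF fI]) auto
  finally have "(\<Sum>i\<in>T. c' i *\<^sub>R u i) = 0" using rel by simp
  then have "\<forall>i\<in>T. c' i = 0" using unimod_basics(4)[OF um] by blast
  then show False using nz T(2) unfolding c'_def T0_def by (metis (mono_tags, lifting) mem_Collect_eq of_int_eq_0_iff subsetD)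
qed


lemma ample_gg:
  fixes u :: "nat \<Rightarrow> real^'n"
  assumes fan: "smooth_complete_fan u I C" and am: "ample u I C x"
  shows "globally_generated u I C x"
  unfolding globally_generated_def
proof (intro allI impI ballI)
  fix S j assume S: "max_cone TYPE('n) C S" and j: "j \<in> I"
  show "mD u x S \<bullet> u j \<ge> - of_int (x j)"
  proof (cases "j \<in> S")
    case True then show ?thesis using mD_prop[OF fan_max_unimod[OF fan S]] by simp
  next
    case False
    then have "j \<in> I - S" using j by blast
    then have "mD u x S \<bullet> u j > - of_int (x j)" using am S unfolding ample_def by blast
    then show ?thesis by simp
  qed
qed

lemma gg_nonneg:
  fixes u :: "nat \<Rightarrow> real^'n"
  assumes fan: "smooth_complete_fan u I C" and gg: "globally_generated u I C x"
    and S0: "max_cone TYPE('n) C S0"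
    and pos: "\<forall>i\<in>I. c i \<ge> 0" and rel: "(\<Sum>i\<in>I. of_int (c i) *\<^sub>R u i) = 0"
  shows "0 \<le> (\<Sum>i\<in>I. c i * x i)"
proof -
  define m where "m = mD u x S0"
  have "0 = m \<bullet> (\<Sum>i\<in>I. of_int (c i) *\<^sub>R u i)" using rel by simp
  also have "\<dots> = (\<Sum>i\<in>I. of_int (c i) * (m \<bullet> u i))" by (simp add: inner_sum_right)
  also have "\<dots> \<ge> (\<Sum>i\<in>I. of_int (c i) * (- of_int (x i)))"
    using gg S0 pos unfolding globally_generated_def m_def
    by (intro sum_mono mult_left_mono) auto
  finally have h: "(\<Sum>i\<in>I. real_of_int (c i) * (- real_of_int (x i))) \<le> 0" .
  have e: "(\<Sum>i\<in>I. real_of_int (c i) * (- real_of_int (x i))) = - real_of_int (\<Sum>i\<in>I. c i * x i)"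
    by (simp add: sum_negf)
  have "0 \<le> real_of_int (\<Sum>i\<in>I. c i * x i)" using h e by linarith
  then show ?thesis by (simp only: of_int_0_le_iff)
qed

lemma step_ineq:
  fixes u :: "nat \<Rightarrow> real^'n"
  assumes fan: "smooth_complete_fan u I C" and gg: "globally_generated u I C x"
    and T: "max_cone TYPE('n) C T" and PI: "P \<subseteq> I"
    and eq: "(\<Sum>i\<in>P. u i) = (\<Sum>i\<in>T. of_int (d i) *\<^sub>R u i)"
  shows "(\<Sum>i\<in>T. d i * x i) \<le> (\<Sum>i\<in>P. x i)"
    and "ample u I C x \<Longrightarrow> \<exists>j\<in>P. j \<notin> T \<Longrightarrow> (\<Sum>i\<in>T. d i * x i) < (\<Sum>i\<in>P. x i)"
proof -
  define m where "m = mD u x T"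
  have um: "unimodular u T" using fan_max_unimod[OF fan T] .
  have fP: "finite P" using fanD(1)[OF fan] PI finite_subset by blast
  have "m \<bullet> (\<Sum>i\<in>T. of_int (d i) *\<^sub>R u i) = (\<Sum>i\<in>T. of_int (d i) * (m \<bullet> u i))"
    by (simp add: inner_sum_right)
  also have "\<dots> = (\<Sum>i\<in>T. of_int (d i) * (- of_int (x i)))"
    using mD_prop[OF um] by (auto simp: m_def intro!: sum.cong)
  also have "\<dots> = - of_int (\<Sum>i\<in>T. d i * x i)" by (simp add: sum_negf)
  finally have R: "m \<bullet> (\<Sum>i\<in>P. u i) = - of_int (\<Sum>i\<in>T. d i * x i)" using eq by simp
  have L: "m \<bullet> (\<Sum>i\<in>P. u i) = (\<Sum>i\<in>P. m \<bullet> u i)" by (simp add: inner_sum_right)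
  have "(\<Sum>i\<in>P. - of_int (x i)) \<le> (\<Sum>i\<in>P. m \<bullet> u i)"
    using gg T PI unfolding globally_generated_def m_def by (intro sum_mono) auto
  moreover have "(\<Sum>i\<in>P. - real_of_int (x i)) = - real_of_int (\<Sum>i\<in>P. x i)" by (simp add: sum_negf)
  ultimately have "real_of_int (\<Sum>i\<in>T. d i * x i) \<le> real_of_int (\<Sum>i\<in>P. x i)" using R L by linarith
  then show "(\<Sum>i\<in>T. d i * x i) \<le> (\<Sum>i\<in>P. x i)" by (simp only: of_int_le_iff)
  assume am: "ample u I C x" and ex: "\<exists>j\<in>P. j \<notin> T"
  have gg': "\<forall>i\<in>P. - of_int (x i) \<le> m \<bullet> u i"
    using gg T PI unfolding globally_generated_def m_def by auto
  have "(\<Sum>i\<in>P. - of_int (x i)) < (\<Sum>i\<in>P. m \<bullet> u i)"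
  proof (rule sum_strict_mono_ex1[OF fP])
    show "\<forall>i\<in>P. - real_of_int (x i) \<le> m \<bullet> u i" using gg' .
    show "\<exists>a\<in>P. - real_of_int (x a) < m \<bullet> u a"
      using ex am T PI unfolding ample_def m_def by blast
  qed
  moreover have "(\<Sum>i\<in>P. - real_of_int (x i)) = - real_of_int (\<Sum>i\<in>P. x i)" by (simp add: sum_negf)
  ultimately have "real_of_int (\<Sum>i\<in>T. d i * x i) < real_of_int (\<Sum>i\<in>P. x i)" using R L by linarith
  then show "(\<Sum>i\<in>T. d i * x i) < (\<Sum>i\<in>P. x i)" by (simp only: of_int_less_iff)
qed


lemma sum_if_sub:
  assumes "finite I" "P \<subseteq> I"
  shows "(\<Sum>i\<in>I. if i \<in> P then f i else 0) = (\<Sum>i\<in>P. f i)"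
proof -
  have "I \<inter> P = P" using assms by auto
  then show ?thesis using sum.inter_restrict[OF assms(1), of f P] by simp
qed

lemma split_vec:
  fixes u :: "nat \<Rightarrow> real^'n"
  assumes "finite I" "P \<subseteq> I" "T \<subseteq> I"
  shows "(\<Sum>i\<in>I. of_int (c i - (if i\<in>P then 1 else 0) + (if i\<in>T then d i else 0)) *\<^sub>R u i)
       = (\<Sum>i\<in>I. of_int (c i) *\<^sub>R u i) - (\<Sum>i\<in>P. u i) + (\<Sum>i\<in>T. of_int (d i) *\<^sub>R u i)"
proof -
  have "(\<Sum>i\<in>I. of_int (c i - (if i\<in>P then 1 else 0) + (if i\<in>T then d i else 0)) *\<^sub>R u i)
      = (\<Sum>i\<in>I. of_int (c i) *\<^sub>R u i - (if i\<in>P then u i else 0) + (if i\<in>T then of_int (d i) *\<^sub>R u i else 0))"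
    by (rule sum.cong[OF refl]) (auto simp: algebra_simps)
  also have "\<dots> = (\<Sum>i\<in>I. of_int (c i) *\<^sub>R u i) - (\<Sum>i\<in>I. if i\<in>P then u i else 0) + (\<Sum>i\<in>I. if i\<in>T then of_int (d i) *\<^sub>R u i else 0)"
    by (simp only: sum.distrib sum_subtractf)
  also have "\<dots> = (\<Sum>i\<in>I. of_int (c i) *\<^sub>R u i) - (\<Sum>i\<in>P. u i) + (\<Sum>i\<in>T. of_int (d i) *\<^sub>R u i)"
    by (simp only: sum_if_sub[OF assms(1,2)] sum_if_sub[OF assms(1,3)])
  finally show ?thesis .
qed

lemma split_int:
  assumes "finite I" "P \<subseteq> I" "T \<subseteq> I"
  shows "(\<Sum>i\<in>I. (c i - (if i\<in>P then 1 else 0) + (if i\<in>T then d i else 0)) * (x i::int))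
       = (\<Sum>i\<in>I. c i * x i) - (\<Sum>i\<in>P. x i) + (\<Sum>i\<in>T. d i * x i)"
proof -
  have "(\<Sum>i\<in>I. (c i - (if i\<in>P then 1 else 0) + (if i\<in>T then d i else 0)) * x i)
      = (\<Sum>i\<in>I. c i * x i - (if i\<in>P then x i else 0) + (if i\<in>T then d i * x i else 0))"
    by (rule sum.cong[OF refl]) (auto simp: algebra_simps)
  also have "\<dots> = (\<Sum>i\<in>I. c i * x i) - (\<Sum>i\<in>I. if i\<in>P then x i else 0) + (\<Sum>i\<in>I. if i\<in>T then d i * x i else 0)"
    by (simp only: sum.distrib sum_subtractf)
  also have "\<dots> = (\<Sum>i\<in>I. c i * x i) - (\<Sum>i\<in>P. x i) + (\<Sum>i\<in>T. d i * x i)"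
    by (simp only: sum_if_sub[OF assms(1,2)] sum_if_sub[OF assms(1,3)])
  finally show ?thesis .
qed


lemma descent:
  fixes u :: "nat \<Rightarrow> real^'n"
  assumes fan: "smooth_complete_fan u I C" and gg: "globally_generated u I C a"
    and am: "ample u I C x" and S0: "max_cone TYPE('n) C S0"
  shows "\<forall>c. nat (\<Sum>i\<in>I. c i * x i) = N \<longrightarrow> (\<forall>i\<in>I. c i \<ge> 0) \<longrightarrow>
           (\<Sum>i\<in>I. of_int (c i) *\<^sub>R u i) = 0 \<longrightarrow> (\<exists>i\<in>I. c i \<noteq> 0) \<longrightarrow>
           (\<exists>Q. centred_primitive_collection u I C Q \<and> (\<Sum>i\<in>Q. a i) \<le> (\<Sum>i\<in>I. c i * a i))"
proof (induction N rule: less_induct)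
  case (less N)
  have fI: "finite I" using fanD(1)[OF fan] .
  have ggx: "globally_generated u I C x" using ample_gg[OF fan am] .
  show ?case
  proof (intro allI impI)
    fix c assume hN: "nat (\<Sum>i\<in>I. c i * x i) = N" and pos: "\<forall>i\<in>I. c i \<ge> 0"
      and rel: "(\<Sum>i\<in>I. of_int (c i) *\<^sub>R u i) = 0" and nz: "\<exists>i\<in>I. c i \<noteq> 0"
    define T0 where "T0 = {i\<in>I. c i \<noteq> 0}"
    have T0C: "T0 \<notin> C" using no_pos_rel_cone[OF fan rel nz] unfolding T0_def .
    have fT0: "finite T0" using fI unfolding T0_def by simp
    have exk: "\<exists>k. \<exists>P. P \<subseteq> T0 \<and> P \<notin> C \<and> card P = k" using T0C by blast
    define k where "k = (LEAST k. \<exists>P. P \<subseteq> T0 \<and> P \<notin> C \<and> card P = k)"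
    obtain P where P: "P \<subseteq> T0" "P \<notin> C" "card P = k"
      using LeastI_ex[OF exk] unfolding k_def[symmetric] by blast
    have minP: "\<forall>Q. Q \<subset> P \<longrightarrow> Q \<in> C"
    proof (intro allI impI)
      fix Q assume QP: "Q \<subset> P"
      then have cQ: "card Q < card P" using finite_subset[OF P(1) fT0] psubset_card_mono by blast
      show "Q \<in> C"
      proof (rule ccontr)
        assume "Q \<notin> C"
        then have "k \<le> card Q" unfolding k_def using QP P(1) by (intro Least_le) blast
        then show False using cQ P(3) by simp
      qed
    qed
    have PI: "P \<subseteq> I" using P(1) T0_def by auto
    have fP: "finite P" using finite_subset[OF PI fI] .
    have pc: "primitive_collection I C P"
      unfolding primitive_collection_def using PI P(2) minP by blast
    have cP: "\<forall>i\<in>P. c i \<ge> 1" using P(1) pos T0_def by force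
    show "\<exists>Q. centred_primitive_collection u I C Q \<and> (\<Sum>i\<in>Q. a i) \<le> (\<Sum>i\<in>I. c i * a i)"
    proof (cases "(\<Sum>i\<in>P. u i) = 0")
      case True
      have cpc: "centred_primitive_collection u I C P"
        using pc True by (simp add: centred_primitive_collection_def)
      define c' where "c' = (\<lambda>i. c i - (if i\<in>P then 1 else 0) + (if i\<in>{} then (0::int) else 0))"
      have pos': "\<forall>i\<in>I. c' i \<ge> 0" using pos cP by (auto simp: c'_def)
      have "(\<Sum>i\<in>I. of_int (c' i) *\<^sub>R u i) = 0"
        unfolding c'_def using split_vec[OF fI PI, of "{}" c "\<lambda>_. 0" u] rel True by simp
      then have "0 \<le> (\<Sum>i\<in>I. c' i * a i)" using gg_nonneg[OF fan gg S0 pos'] by blast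
      also have "(\<Sum>i\<in>I. c' i * a i) = (\<Sum>i\<in>I. c i * a i) - (\<Sum>i\<in>P. a i)"
        unfolding c'_def using split_int[OF fI PI, of "{}" c "\<lambda>_. 0" a] by simp
      finally show ?thesis using cpc by auto
    next
      case False
      define v where "v = (\<Sum>i\<in>P. u i)"
      have "v \<in> (\<Union>S\<in>C. cone_gen u S)" using fanD(9)[OF fan] by simp
      then obtain S where S: "S \<in> C" "v \<in> cone_gen u S" by blast
      obtain T where T: "max_cone TYPE('n) C T" "S \<subseteq> T" using fan_cone_in_max[OF fan S(1)] by blast
      have umT: "unimodular u T" using fan_max_unimod[OF fan T(1)] .
      have fT: "finite T" using unimod_basics(1)[OF umT] .
      have TC: "T \<in> C" using T(1) maxD by blast
      have TI: "T \<subseteq> I" using fanD(4)[OF fan] TC by blast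
      have "v \<in> cone_gen u T" using cone_gen_mono[OF T(2) fT] S(2) by blast
      then obtain t where t: "v = (\<Sum>i\<in>T. t i *\<^sub>R u i)" "\<forall>i\<in>T. t i \<ge> 0"
        unfolding cone_gen_def mem_Collect_eq by blast
      have iv: "integral_vec v" unfolding v_def
        using fanD(3)[OF fan] PI unfolding primitive_vec_def by (intro integral_sum) blast
      obtain d where d: "v = (\<Sum>i\<in>T. of_int (d i) *\<^sub>R u i)" "\<forall>i\<in>T. d i \<ge> 0"
        using int_coeffs[OF umT iv t] by blast
      define c' where "c' = (\<lambda>i. c i - (if i\<in>P then 1 else 0) + (if i\<in>T then d i else 0))"
      have pos': "\<forall>i\<in>I. c' i \<ge> 0" using pos cP d(2) by (auto simp: c'_def)
      have rel': "(\<Sum>i\<in>I. of_int (c' i) *\<^sub>R u i) = 0"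
        unfolding c'_def using split_vec[OF fI PI TI, of c d u] rel d(1) v_def by simp
      have nz': "\<exists>i\<in>I. c' i \<noteq> 0"
      proof (rule ccontr)
        assume "\<not> (\<exists>i\<in>I. c' i \<noteq> 0)"
        then have z: "\<forall>i\<in>I. c' i = 0" by blast
        have "\<forall>i\<in>T. d i = 0"
        proof
          fix i assume iT: "i \<in> T"
          then have "c' i = 0" "c i \<ge> 0" using z pos TI by auto
          moreover have "d i \<ge> 0" using d(2) iT by blast
          moreover have "i \<in> P \<Longrightarrow> c i \<ge> 1" using cP by blast
          ultimately show "d i = 0" using iT unfolding c'_def by (auto split: if_splits)
        qed
        then have "v = 0" using d(1) by simp
        then show False using False v_def by simp
      qed
      have PT: "\<exists>j\<in>P. j \<notin> T"
      proof (rule ccontr)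
        assume "\<not> (\<exists>j\<in>P. j \<notin> T)"
        then have "P \<subseteq> T" by blast
        then have "P \<in> C" using fanD(5)[OF fan] TC by blast
        then show False using P(2) by simp
      qed
      have eqv: "(\<Sum>i\<in>P. u i) = (\<Sum>i\<in>T. of_int (d i) *\<^sub>R u i)" using d(1) v_def by simp
      have sx: "(\<Sum>i\<in>T. d i * x i) < (\<Sum>i\<in>P. x i)"
        using step_ineq(2)[OF fan ggx T(1) PI eqv am PT] .
      have sa: "(\<Sum>i\<in>T. d i * a i) \<le> (\<Sum>i\<in>P. a i)"
        using step_ineq(1)[OF fan gg T(1) PI eqv] .
      have ex: "(\<Sum>i\<in>I. c' i * x i) = (\<Sum>i\<in>I. c i * x i) - (\<Sum>i\<in>P. x i) + (\<Sum>i\<in>T. d i * x i)"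
        unfolding c'_def using split_int[OF fI PI TI] .
      have ea: "(\<Sum>i\<in>I. c' i * a i) = (\<Sum>i\<in>I. c i * a i) - (\<Sum>i\<in>P. a i) + (\<Sum>i\<in>T. d i * a i)"
        unfolding c'_def using split_int[OF fI PI TI] .
      have nn: "0 \<le> (\<Sum>i\<in>I. c' i * x i)" using gg_nonneg[OF fan ggx S0 pos' rel'] .
      have "nat (\<Sum>i\<in>I. c' i * x i) < N" using hN ex sx nn by linarith
      then obtain Q where Q: "centred_primitive_collection u I C Q" "(\<Sum>i\<in>Q. a i) \<le> (\<Sum>i\<in>I. c' i * a i)"
        using less.IH pos' rel' nz' by blast
      then show ?thesis using ea sa by (intro exI[of _ Q]) auto
    qed
  qed
qed

theorem mainTheorem9:
  fixes u :: "nat \<Rightarrow> real^'n" and C :: "nat set set" and r :: nat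
    and a :: "nat \<Rightarrow> int" and b :: "nat \<Rightarrow> nat \<Rightarrow> int"
  defines "n \<equiv> CARD('n)"
  defines "P \<equiv> (\<lambda>j k. if k = n + j then 1 else if k \<in> {1..n} then b k j else (0::int))"
  assumes fan: "smooth_projective_fan u {1..n+r} C"
    and sigma0: "{1..n} \<in> C"
    and nonpos: "\<forall>j\<in>{1..r}. \<exists>c::nat \<Rightarrow> real. (\<forall>i\<in>{1..n}. c i \<le> 0) \<and>
                   u (n + j) = (\<Sum>i=1..n. c i *\<^sub>R u i)"
    and rel: "\<forall>j\<in>{1..r}. u (n + j) + (\<Sum>i=1..n. of_int (b i j) *\<^sub>R u i) = 0"
  shows "(\<forall>j\<in>{1..r}. positive_relation u {1..n+r} (P j)) \<and>
         (globally_generated u {1..n+r} C a \<longrightarrow>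
           (\<forall>j\<in>{1..r}.
              degL u {1..n+r} C a (P j) = of_int (a (n + j) + (\<Sum>i=1..n. a i * b i j)) \<and>
              degL u {1..n+r} C a (P j) \<ge> beta u {1..n+r} C a))"
proof -
  define I where "I = {1..n+r}"
  have fan0: "smooth_complete_fan u I C" and "\<exists>x. ample u I C x"
    using fan unfolding smooth_projective_fan_def I_def by blast+
  then obtain x where am: "ample u I C x" by blast
  have fI: "finite I" using fanD(1)[OF fan0] .
  have cn: "card {1..n} = CARD('n)" by (simp add: n_def)
  have S0: "max_cone TYPE('n) C {1..n}" using sigma0 cn maxD by blast
  have um0: "unimodular u {1..n}" using fan_max_unimod[OF fan0 S0] .
  have nI: "{1..n} \<subseteq> I" by (auto simp: I_def)
  have bpos: "\<forall>j\<in>{1..r}. \<forall>i\<in>{1..n}. b i j \<ge> 0"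
  proof (intro ballI)
    fix j i assume j: "j \<in> {1..r}" and i: "i \<in> {1..n}"
    obtain c :: "nat \<Rightarrow> real" where c: "\<forall>i\<in>{1..n}. c i \<le> 0" "u (n + j) = (\<Sum>i=1..n. c i *\<^sub>R u i)"
      using nonpos j by blast
    have r: "u (n + j) + (\<Sum>i=1..n. of_int (b i j) *\<^sub>R u i) = 0" using rel j by blast
    have "(\<Sum>i=1..n. (c i + of_int (b i j)) *\<^sub>R u i) = 0"
      using r c(2) by (simp add: scaleR_add_left sum.distrib)
    then have "\<forall>i\<in>{1..n}. c i + of_int (b i j) = 0"
      using unimod_basics(4)[OF um0, of "\<lambda>i. c i + of_int (b i j)"] by blast
    then have "c i + of_int (b i j) = 0" using i by blast
    then have "of_int (b i j) = - c i" by linarith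
    then have "real_of_int (b i j) \<ge> 0" using c(1) i by simp
    then show "b i j \<ge> 0" by simp
  qed
  have Pvec: "(\<Sum>k\<in>I. of_int (P j k) *\<^sub>R u k) = 0" if j: "j \<in> {1..r}" for j
  proof -
    have nj: "n + j \<in> I" "n + j \<notin> {1..n}" using j by (auto simp: I_def)
    have "(\<Sum>k\<in>I. of_int (P j k) *\<^sub>R u k)
        = (\<Sum>k\<in>I. (if k = n + j then u k else 0) + (if k \<in> {1..n} then of_int (b k j) *\<^sub>R u k else 0))"
      by (rule sum.cong[OF refl]) (use nj in \<open>auto simp: P_def\<close>)
    also have "\<dots> = (\<Sum>k\<in>I. if k = n + j then u k else 0) + (\<Sum>k\<in>I. if k \<in> {1..n} then of_int (b k j) *\<^sub>R u k else 0)"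
      by (simp only: sum.distrib)
    also have "\<dots> = u (n + j) + (\<Sum>i=1..n. of_int (b i j) *\<^sub>R u i)"
      using nj(1) by (simp only: sum_if_sub[OF fI nI] sum.delta[OF fI] if_True)
    also have "\<dots> = 0" using rel j by blast
    finally show ?thesis .
  qed
  have Pint: "(\<Sum>k\<in>I. P j k * a k) = a (n + j) + (\<Sum>i=1..n. a i * b i j)" if j: "j \<in> {1..r}" for j
  proof -
    have nj: "n + j \<in> I" "n + j \<notin> {1..n}" using j by (auto simp: I_def)
    have "(\<Sum>k\<in>I. P j k * a k)
        = (\<Sum>k\<in>I. (if k = n + j then a k else 0) + (if k \<in> {1..n} then a k * b k j else 0))"
      by (rule sum.cong[OF refl]) (use nj in \<open>auto simp: P_def\<close>)
    also have "\<dots> = (\<Sum>k\<in>I. if k = n + j then a k else 0) + (\<Sum>k\<in>I. if k \<in> {1..n} then a k * b k j else 0)"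
      by (simp only: sum.distrib)
    also have "\<dots> = a (n + j) + (\<Sum>i=1..n. a i * b i j)"
      using nj(1) by (simp only: sum_if_sub[OF fI nI] sum.delta[OF fI] if_True)
    finally show ?thesis .
  qed
  have Ppos: "\<forall>k\<in>I. P j k \<ge> 0" if j: "j \<in> {1..r}" for j
    using bpos j by (auto simp: P_def)
  have Pnz: "\<exists>k\<in>I. P j k \<noteq> 0" if j: "j \<in> {1..r}" for j
  proof
    show "n + j \<in> I" using j by (auto simp: I_def)
    show "P j (n + j) \<noteq> 0" by (simp add: P_def)
  qed
  have part1: "\<forall>j\<in>{1..r}. positive_relation u I (P j)"
    unfolding positive_relation_def is_relation_def using Pvec Ppos Pnz by blast
  have part2: "degL u I C a (P j) = of_int (a (n + j) + (\<Sum>i=1..n. a i * b i j)) \<and>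
              degL u I C a (P j) \<ge> beta u I C a"
    if gg: "globally_generated u I C a" and j: "j \<in> {1..r}" for j
  proof -
    have d: "degL u I C a (P j) = of_int (a (n + j) + (\<Sum>i=1..n. a i * b i j))"
      by (simp only: degL_eq[OF fan0] Pint[OF j])
    obtain Q where Q: "centred_primitive_collection u I C Q" "(\<Sum>i\<in>Q. a i) \<le> (\<Sum>k\<in>I. P j k * a k)"
      using descent[OF fan0 gg am S0] Pvec[OF j] Ppos[OF j] Pnz[OF j] by blast
    have QI: "Q \<subseteq> I" using Q(1) by (simp add: centred_primitive_collection_def primitive_collection_def)
    have dQ: "degL u I C a (centred_rel Q) = of_int (\<Sum>i\<in>Q. a i)"
    proof -
      have "(\<Sum>i\<in>I. centred_rel Q i * a i) = (\<Sum>i\<in>I. if i \<in> Q then a i else 0)"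
        by (rule sum.cong[OF refl]) (simp add: centred_rel_def)
      also have "\<dots> = (\<Sum>i\<in>Q. a i)" using sum_if_sub[OF fI QI] .
      finally have e: "(\<Sum>i\<in>I. centred_rel Q i * a i) = (\<Sum>i\<in>Q. a i)" .
      show ?thesis by (simp only: degL_eq[OF fan0] e)
    qed
    define A where "A = {degL u I C a (centred_rel Q) | Q. centred_primitive_collection u I C Q}"
    have "A \<subseteq> (\<lambda>Q. degL u I C a (centred_rel Q)) ` Pow I"
      unfolding A_def centred_primitive_collection_def primitive_collection_def by blast
    then have fA: "finite A" using fI by (meson finite_Pow_iff finite_imageI finite_subset)
    have "degL u I C a (centred_rel Q) \<in> A" unfolding A_def using Q(1) by blast
    then have "beta u I C a \<le> degL u I C a (centred_rel Q)"
      unfolding beta_def A_def[symmetric] using fA by (rule Min_le[rotated])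
    also have "\<dots> \<le> degL u I C a (P j)"
      using Q(2) Pint[OF j] unfolding dQ d of_int_le_iff by simp
    finally show ?thesis using d by simp
  qed
  show ?thesis using part1 part2 unfolding I_def by blast
qed

end
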